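(* For every integer $k\ge1$, $$(\widetilde{\mathbb P}_k)^3=\widetilde{\mathbb S}^*_k\oplus\widetilde{\mathbb I}^*_k\oplus\widetilde{\mathbb H}_k,$$ i.e. every $\mathbf V\in(\widetilde{\mathbb P}_k)^3$ can be written uniquely as $\mathbf V=\mathbf F+\mathbf G+\mathbf H$ with $(\mathbf F,\mathbf G,\mathbf H)\in\widetilde{\mathbb S}^*_k\times\widetilde{\mathbb I}^*_k\times\widetilde{\mathbb H}_k$. Moreover $(\widetilde{\mathbb P}_0)^3=\widetilde{\mathbb H}_0$.
   Context: $\widetilde{\mathbb P}_l$ denotes the space of real homogeneous polynomials of degree $l$ in three variables. For $k\ge1$, $\widetilde{\mathbb S}_k=\{\mathbf\Phi\in(\widetilde{\mathbb P}_k)^3:\nabla\cdot\mathbf\Phi=0\}$, $\widetilde{\mathbb I}_k=\{\mathbf\Phi\in(\widetilde{\mathbb P}_k)^3:\nabla\times\mathbf\Phi=0\}$, $\widetilde{\mathbb H}_k=\widetilde{\mathbb S}_k\cap\widetilde{\mathbb I}_k$, and $\widetilde{\mathbb H}_0=(\widetilde{\mathbb P}_0)^3$. $\widetilde{\mathbb S}^*_k$ and $\widetilde{\mathbb I}^*_k$ denote (arbitrary but fixed) complements of $\widetilde{\mathbb H}_k$ in $\widetilde{\mathbb S}_k$ and in $\widetilde{\mathbb I}_k$ respectively, i.e. $\widetilde{\mathbb S}_k=\widetilde{\mathbb S}^*_k\oplus\widetilde{\mathbb H}_k$ and $\widetilde{\mathbb I}_k=\widetilde{\mathbb I}^*_k\oplus\widetilde{\mathbb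 H}_k$. *)

theory Defs
  imports "HOL-Analysis.Analysis"
begin

(* A real polynomial in three variables x1,x2,x3 is represented by its coefficient
   function: p (a,b,c) is the coefficient of x1^a x2^b x3^c (finitely supported).
   A polynomial vector field (Phi_1,Phi_2,Phi_3) is represented by
   V :: monomial => real^3, with (V m) $ i the coefficient of monomial m in Phi_i. *)

type_synonym mono = "nat \<times> nat \<times> nat"
type_synonym cpoly = "mono \<Rightarrow> real"
type_synonym vfield = "mono \<Rightarrow> real^3"

fun mdeg :: "mono \<Rightarrow> nat" where
  "mdeg (a, b, c) = a + b + c"

definition hom_poly :: "nat \<Rightarrow> cpoly \<Rightarrow> bool" where
  "hom_poly k p \<longleftrightarrow> (\<forall>m. p m \<noteq> 0 \<longrightarrow> mdeg m = k)"

definition Pk3 :: "nat \<Rightarrow> vfield set" where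
  "Pk3 k = {V. \<forall>i. hom_poly k (\<lambda>m. V m $ i)}"

fun dx1 :: "cpoly \<Rightarrow> cpoly" where
  "dx1 p (a, b, c) = real (Suc a) * p (Suc a, b, c)"
fun dx2 :: "cpoly \<Rightarrow> cpoly" where
  "dx2 p (a, b, c) = real (Suc b) * p (a, Suc b, c)"
fun dx3 :: "cpoly \<Rightarrow> cpoly" where
  "dx3 p (a, b, c) = real (Suc c) * p (a, b, Suc c)"

definition comp :: "vfield \<Rightarrow> 3 \<Rightarrow> cpoly" where
  "comp V i = (\<lambda>m. V m $ i)"

definition vdiv :: "vfield \<Rightarrow> cpoly" where
  "vdiv V = (\<lambda>m. dx1 (comp V 1) m + dx2 (comp V 2) m + dx3 (comp V 3) m)"

definition vcurl :: "vfield \<Rightarrow> vfield" where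
  "vcurl V = (\<lambda>m. vector [dx2 (comp V 3) m - dx3 (comp V 2) m,
                            dx3 (comp V 1) m - dx1 (comp V 3) m,
                            dx1 (comp V 2) m - dx2 (comp V 1) m])"

definition vadd :: "vfield \<Rightarrow> vfield \<Rightarrow> vfield" where
  "vadd F G = (\<lambda>m. F m + G m)"

definition vscale :: "real \<Rightarrow> vfield \<Rightarrow> vfield" where
  "vscale c F = (\<lambda>m. c *\<^sub>R F m)"

definition vzero :: vfield where
  "vzero = (\<lambda>m. 0)"

definition Sk :: "nat \<Rightarrow> vfield set" where
  "Sk k = {V \<in> Pk3 k. vdiv V = (\<lambda>m. 0)}"

definition Ik :: "nat \<Rightarrow> vfield set" where
  "Ik k = {V \<in> Pk3 k. vcurl V = vzero}"

definition Hk :: "nat \<Rightarrow> vfield set" where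
  "Hk k = (if k = 0 then Pk3 0 else Sk k \<inter> Ik k)"

definition lin_subspace :: "vfield set \<Rightarrow> bool" where
  "lin_subspace U \<longleftrightarrow> vzero \<in> U \<and> (\<forall>x\<in>U. \<forall>y\<in>U. vadd x y \<in> U)
      \<and> (\<forall>c. \<forall>x\<in>U. vscale c x \<in> U)"

definition is_complement :: "vfield set \<Rightarrow> vfield set \<Rightarrow> vfield set \<Rightarrow> bool" where
  "is_complement C H W \<longleftrightarrow> lin_subspace C \<and> C \<subseteq> W \<and> C \<inter> H = {vzero}
      \<and> W = {vadd x y | x y. x \<in> C \<and> y \<in> H}"

end

theory Submission
  imports Defs
begin

fun solve :: "cpoly \<Rightarrow> nat \<Rightarrow> nat \<Rightarrow> nat \<Rightarrow> real" where
  "solve q 0 b c = 0"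
| "solve q (Suc 0) b c = 0"
| "solve q (Suc (Suc a)) b c =
     (q (a, b, c) - real ((b+1)*(b+2)) * solve q a (b+2) c
        - real ((c+1)*(c+2)) * solve q a b (c+2)) / real ((a+1)*(a+2))"

lemma solve_eq:
  "real ((a+1)*(a+2)) * solve q (Suc (Suc a)) b c + real ((b+1)*(b+2)) * solve q a (b+2) c
     + real ((c+1)*(c+2)) * solve q a b (c+2) = q (a, b, c)"
  by (simp del: of_nat_mult add: field_simps)

lemma solve_hom:
  "(\<forall>a b c. q (a, b, c) \<noteq> 0 \<longrightarrow> a + b + c + 2 = n) \<Longrightarrow> solve q a b c \<noteq> 0 \<Longrightarrow> a + b + c = n"
proof (induction q a b c rule: solve.induct)
  case (3 q a b c)
  then show ?case
    by (cases "q (a,b,c) = 0"; cases "solve q a (b+2) c = 0"; cases "solve q a b (c+2) = 0") auto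
qed auto

lemma hom_add: "hom_poly k p \<Longrightarrow> hom_poly k r \<Longrightarrow> hom_poly k (\<lambda>m. p m + r m)"
  unfolding hom_poly_def by (metis add.left_neutral)

lemma hom_scale: "hom_poly k p \<Longrightarrow> hom_poly k (\<lambda>m. c * p m)"
  unfolding hom_poly_def by fastforce

lemma Pk3_add: "x \<in> Pk3 k \<Longrightarrow> y \<in> Pk3 k \<Longrightarrow> vadd x y \<in> Pk3 k"
  unfolding Pk3_def vadd_def using hom_add by simp

lemma Pk3_scale: "x \<in> Pk3 k \<Longrightarrow> vscale c x \<in> Pk3 k"
  unfolding Pk3_def vscale_def using hom_scale by simp

lemma vdiv_add: "vdiv (vadd x y) m = vdiv x m + vdiv y m"
  by (cases m) (simp add: vdiv_def comp_def vadd_def algebra_simps)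

lemma vdiv_scale: "vdiv (vscale c x) m = c * vdiv x m"
  by (cases m) (simp add: vdiv_def comp_def vscale_def algebra_simps)

lemma vcurl_add: "vcurl (vadd x y) m = vcurl x m + vcurl y m"
  by (cases m) (simp add: vcurl_def comp_def vadd_def algebra_simps vec_eq_iff forall_3)

lemma vcurl_scale: "vcurl (vscale c x) m = c *\<^sub>R vcurl x m"
  by (cases m) (simp add: vcurl_def comp_def vscale_def algebra_simps vec_eq_iff forall_3)

lemma Sk_sub: "lin_subspace (Sk k)"
  unfolding lin_subspace_def Sk_def
  by (auto simp: Pk3_add Pk3_scale vdiv_add vdiv_scale fun_eq_iff)
     (auto simp: vzero_def Pk3_def hom_poly_def vdiv_def comp_def split: prod.splits)

lemma Ik_sub: "lin_subspace (Ik k)"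
  unfolding lin_subspace_def Ik_def
  by (auto simp: Pk3_add Pk3_scale vcurl_add vcurl_scale fun_eq_iff vzero_def)
     (auto simp: Pk3_def hom_poly_def vcurl_def comp_def vec_eq_iff forall_3 split: prod.splits)

lemma Hk_sub: "k \<ge> 1 \<Longrightarrow> lin_subspace (Hk k)"
  using Sk_sub Ik_sub unfolding Hk_def lin_subspace_def by auto

lemma sub_diff: "lin_subspace U \<Longrightarrow> x \<in> U \<Longrightarrow> y \<in> U \<Longrightarrow> vadd x (vscale (-1) y) \<in> U"
  unfolding lin_subspace_def by blast

lemma hom_dx1: "hom_poly (Suc k) p \<Longrightarrow> hom_poly k (dx1 p)"
  unfolding hom_poly_def by (intro allI impI, case_tac m) force
lemma hom_dx2: "hom_poly (Suc k) p \<Longrightarrow> hom_poly k (dx2 p)"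
  unfolding hom_poly_def by (intro allI impI, case_tac m) force
lemma hom_dx3: "hom_poly (Suc k) p \<Longrightarrow> hom_poly k (dx3 p)"
  unfolding hom_poly_def by (intro allI impI, case_tac m) force

lemma dx12: "dx1 (dx2 p) m = dx2 (dx1 p) m" by (cases m) simp
lemma dx13: "dx1 (dx3 p) m = dx3 (dx1 p) m" by (cases m) simp
lemma dx23: "dx2 (dx3 p) m = dx3 (dx2 p) m" by (cases m) simp

lemma decomp:
  assumes "k \<ge> 1" "V \<in> Pk3 k"
  shows "\<exists>F G. F \<in> Sk k \<and> G \<in> Ik k \<and> V = vadd F G"
proof -
  define q where "q = vdiv V"
  have qh: "a + b + c + 2 = k + 1" if "q (a, b, c) \<noteq> 0" for a b c
  proof -
    have "V (Suc a, b, c) $ 1 \<noteq> 0 \<or> V (a, Suc b, c) $ 2 \<noteq> 0 \<or> V (a, b, Suc c) $ 3 \<noteq> 0"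
      using that by (auto simp: q_def vdiv_def comp_def)
    moreover have h: "\<And>i m. V m $ i \<noteq> 0 \<Longrightarrow> mdeg m = k"
      using assms(2) by (auto simp: Pk3_def hom_poly_def)
    ultimately show ?thesis using h[of "(Suc a, b, c)" 1] h[of "(a, Suc b, c)" 2] h[of "(a, b, Suc c)" 3]
      by auto
  qed
  define P :: cpoly where "P = (\<lambda>(a,b,c). solve q a b c)"
  have qh': "\<forall>a b c. q (a, b, c) \<noteq> 0 \<longrightarrow> a + b + c + 2 = k + 1" using qh by blast
  have Ph: "hom_poly (k+1) P"
    unfolding hom_poly_def P_def using solve_hom[OF qh'] by auto
  define G :: vfield where "G = (\<lambda>m. vector [dx1 P m, dx2 P m, dx3 P m])"
  define F :: vfield where "F = vadd V (vscale (-1) G)"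
  have GP: "G \<in> Pk3 k"
    unfolding Pk3_def G_def
  proof (clarify)
    fix i :: 3
    show "hom_poly k (\<lambda>m. vector [dx1 P m, dx2 P m, dx3 P m] $ i)"
      using exhaust_3[of i] hom_dx1[OF Ph[simplified]] hom_dx2[OF Ph[simplified]]
        hom_dx3[OF Ph[simplified]] by auto
  qed
  have Gc: "vcurl G = vzero"
    by (simp add: vcurl_def G_def comp_def vzero_def fun_eq_iff vec_eq_iff forall_3 dx12 dx13 dx23)
  have Gd: "vdiv G = q"
  proof
    fix m show "vdiv G m = q m"
    proof (cases m)
      case (fields a b c)
      have "vdiv G m = real ((a+1)*(a+2)) * solve q (Suc (Suc a)) b c + real ((b+1)*(b+2)) * solve q a (b+2) c
     + real ((c+1)*(c+2)) * solve q a b (c+2)"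
        by (simp add: fields vdiv_def G_def comp_def P_def numeral_2_eq_2 algebra_simps)
      then show ?thesis using solve_eq fields by simp
    qed
  qed
  have "F \<in> Sk k"
    unfolding Sk_def F_def using Pk3_add Pk3_scale GP assms(2)
    by (auto simp: vdiv_add vdiv_scale Gd q_def)
  moreover have "G \<in> Ik k" unfolding Ik_def using GP Gc by auto
  moreover have "V = vadd F G" by (auto simp: F_def vadd_def vscale_def)
  ultimately show ?thesis by blast
qed

theorem mainTheorem9:
  shows "(\<forall>k::nat. \<forall>Sstar Istar. k \<ge> 1 \<longrightarrow>
            is_complement Sstar (Hk k) (Sk k) \<longrightarrow>
            is_complement Istar (Hk k) (Ik k) \<longrightarrow>
            (\<forall>V \<in> Pk3 k. \<exists>!(F, G, H). F \<in> Sstar \<and> G \<in> Istar \<and> H \<in> Hk k \<and>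
                 V = vadd (vadd F G) H))
         \<and> Pk3 0 = Hk 0"
proof (intro conjI allI impI ballI)
  show "Pk3 0 = Hk 0" by (simp add: Hk_def)
next
  fix k :: nat and Sstar Istar V
  assume k: "k \<ge> 1" and cS: "is_complement Sstar (Hk k) (Sk k)"
    and cI: "is_complement Istar (Hk k) (Ik k)" and V: "V \<in> Pk3 k"
  have HS: "Hk k = Sk k \<inter> Ik k" using k by (simp add: Hk_def)
  have sS: "lin_subspace Sstar" and SS: "Sstar \<subseteq> Sk k" and iS: "Sstar \<inter> Hk k = {vzero}"
    and eS: "Sk k = {vadd x y | x y. x \<in> Sstar \<and> y \<in> Hk k}"
    using cS unfolding is_complement_def by auto
  have sI: "lin_subspace Istar" and II: "Istar \<subseteq> Ik k" and iI: "Istar \<inter> Hk k = {vzero}"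
    and eI: "Ik k = {vadd x y | x y. x \<in> Istar \<and> y \<in> Hk k}"
    using cI unfolding is_complement_def by auto
  obtain A B where A: "A \<in> Sk k" and B: "B \<in> Ik k" and VAB: "V = vadd A B"
    using decomp[OF k V] by blast
  obtain F H1 where F: "F \<in> Sstar" "H1 \<in> Hk k" "A = vadd F H1" using A eS by blast
  obtain G H2 where G: "G \<in> Istar" "H2 \<in> Hk k" "B = vadd G H2" using B eI by blast
  have H: "vadd H1 H2 \<in> Hk k" using Hk_sub[OF k] F G unfolding lin_subspace_def by blast
  have V1: "V = vadd (vadd F G) (vadd H1 H2)"
    using VAB F G by (auto simp: vadd_def fun_eq_iff algebra_simps)
  show "\<exists>!(F, G, H). F \<in> Sstar \<and> G \<in> Istar \<and> H \<in> Hk k \<and> V = vadd (vadd F G) H"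
  proof (rule ex1I[of _ "(F, G, vadd H1 H2)"])
    show "case (F, G, vadd H1 H2) of (F, G, H) \<Rightarrow> F \<in> Sstar \<and> G \<in> Istar \<and> H \<in> Hk k \<and> V = vadd (vadd F G) H"
      using F G H V1 by simp
  next
    fix y assume y: "case y of (F, G, H) \<Rightarrow> F \<in> Sstar \<and> G \<in> Istar \<and> H \<in> Hk k \<and> V = vadd (vadd F G) H"
    obtain F' G' H' where yy: "y = (F', G', H')" by (cases y) auto
    have F': "F' \<in> Sstar" and G': "G' \<in> Istar" and H': "H' \<in> Hk k"
      and V2: "V = vadd (vadd F' G') H'" using y yy by auto
    define D where "D = vadd F' (vscale (-1) F)"
    define E where "E = vadd G' (vscale (-1) G)"
    define K where "K = vadd H' (vscale (-1) (vadd H1 H2))"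
    have D: "D \<in> Sstar" using sub_diff[OF sS F' F(1)] D_def by simp
    have E: "E \<in> Istar" using sub_diff[OF sI G' G(1)] E_def by simp
    have K: "K \<in> Hk k" using sub_diff[OF Hk_sub[OF k] H' H] K_def by simp
    have eq: "\<And>m. F' m + G' m + H' m = F m + G m + (H1 m + H2 m)"
      using V1 V2 by (metis vadd_def)
    have DEK: "D = vscale (-1) (vadd E K)"
      unfolding D_def E_def K_def vadd_def vscale_def fun_eq_iff
      using eq by (auto simp: algebra_simps)
    have "vadd E K \<in> Ik k" using E K II HS Ik_sub unfolding lin_subspace_def by blast
    hence "D \<in> Ik k" using DEK Ik_sub unfolding lin_subspace_def by blast
    hence "D \<in> Hk k" using D SS HS by blast
    hence D0: "D = vzero" using D iS by blast
    hence "vscale (-1) (vadd E K) = vzero" using DEK by simp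
    hence z: "\<And>m. E m + K m = 0"
      unfolding vzero_def vscale_def vadd_def fun_eq_iff
      by (metis (no_types) scaleR_minus1_left neg_equal_0_iff_equal)
    have "E = vscale (-1) K" unfolding vscale_def fun_eq_iff
      using z by (simp add: eq_neg_iff_add_eq_0)
    hence "E \<in> Hk k" using K Hk_sub[OF k] unfolding lin_subspace_def by blast
    hence E0: "E = vzero" using E iI by blast
    have "F' = F" using D0 unfolding D_def vzero_def vadd_def vscale_def fun_eq_iff by simp
    moreover have "G' = G" using E0 unfolding E_def vzero_def vadd_def vscale_def fun_eq_iff by simp
    moreover have "H' = vadd H1 H2" using eq calculation unfolding vadd_def fun_eq_iff by simp
    ultimately show "y = (F, G, vadd H1 H2)" using yy by simp
  qed
qed

end
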